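(* Let $R$ be a ring with identity and $a,b,c\in R$. The following are equivalent: (i) $a$ is right $(b,c)$-invertible; (ii) ${}^\circ a\cap Rc=\{0\}$, $Rca\cap {}^\circ b=\{0\}$ and $R=abR+c^\circ$; (iii) ${}^\circ a\cap Rc=\{0\}$ and $R=abR+c^\circ$; (iv) $Rca\cap {}^\circ b=\{0\}$ and $R=abR+c^\circ$; (v) $R=abR+c^\circ$.
   Context: For $x\in R$: $xR=\{xr:r\in R\}$, $Rx=\{rx:r\in R\}$, $x^\circ=\{r: xr=0\}$, ${}^\circ x=\{r: rx=0\}$. The element $a$ is right $(b,c)$-invertible if there is $y\in R$ with $yR\subseteq bR$ and $cay=c$. *)

theory Defs
  imports Main
begin

definition right_ideal_gen :: "'a::ring_1 \<Rightarrow> 'a set" where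
  "right_ideal_gen x = {x * r | r. True}"

definition left_ideal_gen :: "'a::ring_1 \<Rightarrow> 'a set" where
  "left_ideal_gen x = {r * x | r. True}"

definition right_annih :: "'a::ring_1 \<Rightarrow> 'a set" where
  "right_annih x = {r. x * r = 0}"

definition left_annih :: "'a::ring_1 \<Rightarrow> 'a set" where
  "left_annih x = {r. r * x = 0}"

definition right_bc_invertible :: "'a::ring_1 \<Rightarrow> 'a \<Rightarrow> 'a \<Rightarrow> bool" where
  "right_bc_invertible a b c \<longleftrightarrow>
     (\<exists>y. right_ideal_gen y \<subseteq> right_ideal_gen b \<and> c * a * y = c)"

definition set_plus_ring :: "'a::ring_1 set \<Rightarrow> 'a set \<Rightarrow> 'a set" where
  "set_plus_ring A B = {x + y | x y. x \<in> A \<and> y \<in> B}"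

end

theory Submission
  imports Defs
begin

lemma inv_iff_v:
  fixes a b c :: "'a::ring_1"
  shows "right_bc_invertible a b c \<longleftrightarrow>
      UNIV = set_plus_ring (right_ideal_gen (a * b)) (right_annih c)"
proof
  assume "right_bc_invertible a b c"
  then obtain y where y: "right_ideal_gen y \<subseteq> right_ideal_gen b" "c * a * y = c"
    unfolding right_bc_invertible_def by blast
  have "y \<in> right_ideal_gen y" unfolding right_ideal_gen_def by (auto intro: exI[of _ 1])
  with y obtain s where s: "y = b * s" unfolding right_ideal_gen_def by blast
  have "r \<in> set_plus_ring (right_ideal_gen (a * b)) (right_annih c)" for r
  proof -
    have "c * (r - a * b * s * r) = c * r - (c * a * (b * s)) * r"
      by (simp add: right_diff_distrib mult.assoc)
    then have "c * (r - a * b * s * r) = 0"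
      using y(2) s by simp
    moreover have "r = a * b * (s * r) + (r - a * b * s * r)" by (simp add: mult.assoc)
    moreover have "a * b * (s * r) \<in> right_ideal_gen (a * b)"
      unfolding right_ideal_gen_def by blast
    moreover have "r - a * b * s * r \<in> right_annih c"
      using calculation(1) unfolding right_annih_def by simp
    ultimately show ?thesis unfolding set_plus_ring_def by blast
  qed
  then show "UNIV = set_plus_ring (right_ideal_gen (a * b)) (right_annih c)" by auto
next
  assume "UNIV = set_plus_ring (right_ideal_gen (a * b)) (right_annih c)"
  then have "(1::'a) \<in> set_plus_ring (right_ideal_gen (a * b)) (right_annih c)" by simp
  then obtain s t where st: "1 = a * b * s + t" "c * t = 0"
    unfolding set_plus_ring_def right_ideal_gen_def right_annih_def by blast
  have "c = c * (a * b * s + t)" using st(1) by simp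
  also have "\<dots> = c * a * (b * s)" using st(2) by (simp add: distrib_left mult.assoc)
  finally have 1: "c * a * (b * s) = c" by simp
  have 2: "right_ideal_gen (b * s) \<subseteq> right_ideal_gen b"
    unfolding right_ideal_gen_def by (auto simp: mult.assoc)
  show "right_bc_invertible a b c" unfolding right_bc_invertible_def using 1 2 by blast
qed

lemma inv_ann:
  fixes a b c :: "'a::ring_1"
  assumes "right_bc_invertible a b c"
  shows "left_annih a \<inter> left_ideal_gen c = {0}"
    "left_ideal_gen (c * a) \<inter> left_annih b = {0}"
proof -
  obtain y where y: "right_ideal_gen y \<subseteq> right_ideal_gen b" "c * a * y = c"
    using assms unfolding right_bc_invertible_def by blast
  have "y \<in> right_ideal_gen y" unfolding right_ideal_gen_def by (auto intro: exI[of _ 1])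
  with y obtain s where s: "y = b * s" unfolding right_ideal_gen_def by blast
  have cab: "c * a * b * s = c" using y(2) s by (simp add: mult.assoc)
  show "left_annih a \<inter> left_ideal_gen c = {0}"
  proof (intro equalityI subsetI)
    fix x assume "x \<in> left_annih a \<inter> left_ideal_gen c"
    then obtain r where x: "x = r * c" "r * c * a = 0"
      unfolding left_annih_def left_ideal_gen_def by blast
    have "x = r * (c * a * b * s)" using x cab by simp
    also have "\<dots> = (r * c * a) * b * s" by (simp add: mult.assoc)
    finally show "x \<in> {0}" using x by simp
  qed (auto simp: left_annih_def left_ideal_gen_def intro: exI[of _ 0])
  show "left_ideal_gen (c * a) \<inter> left_annih b = {0}"
  proof (intro equalityI subsetI)
    fix x assume "x \<in> left_ideal_gen (c * a) \<inter> left_annih b"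
    then obtain r where x: "x = r * (c * a)" "r * (c * a) * b = 0"
      unfolding left_annih_def left_ideal_gen_def by blast
    have "x = r * (c * a * b * s) * a" using x cab by (simp add: mult.assoc)
    also have "\<dots> = (r * (c * a) * b) * s * a" by (simp add: mult.assoc)
    finally show "x \<in> {0}" using x by simp
  qed (auto simp: left_annih_def left_ideal_gen_def intro: exI[of _ 0])
qed

theorem theorem2p14:
  fixes a b c :: "'a::ring_1"
  shows
  "(right_bc_invertible a b c \<longleftrightarrow>
      (left_annih a \<inter> left_ideal_gen c = {0} \<and>
       left_ideal_gen (c * a) \<inter> left_annih b = {0} \<and>
       UNIV = set_plus_ring (right_ideal_gen (a * b)) (right_annih c)))
 \<and> (right_bc_invertible a b c \<longleftrightarrow>
      (left_annih a \<inter> left_ideal_gen c = {0} \<and>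
       UNIV = set_plus_ring (right_ideal_gen (a * b)) (right_annih c)))
 \<and> (right_bc_invertible a b c \<longleftrightarrow>
      (left_ideal_gen (c * a) \<inter> left_annih b = {0} \<and>
       UNIV = set_plus_ring (right_ideal_gen (a * b)) (right_annih c)))
 \<and> (right_bc_invertible a b c \<longleftrightarrow>
      UNIV = set_plus_ring (right_ideal_gen (a * b)) (right_annih c))"
  using inv_iff_v[of a b c] inv_ann[of a b c] by blast

end
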